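(* Let $Q\in\mathbb{R}^{d\times N}$ be the matrix whose columns are unit vectors $q_1,\dots,q_N\in\mathcal S^{d-1}$, and fix $v\in\mathcal S^{d-1}$. Define \[\mathcal C_{\mathrm{eig}}=\{x\in\mathbb{R}^N: x\ge0,\ Q\,\mathrm{diag}(Q^\top v)\,x=v\},\qquad \mathcal C_{\mathrm{dom}}=\{x\in\mathcal C_{\mathrm{eig}}: I-Q\,\mathrm{diag}(x)\,Q^\top\succeq0\}.\] For any $x\in\mathcal C_{\mathrm{eig}}$, the probability weights $\alpha_i=x_i/(\mathbf 1^\top x)$ make $v$ an eigenvector of $\Sigma=\sum_{i=1}^N\alpha_iq_iq_i^\top$ with eigenvalue $(\mathbf 1^\top x)^{-1}$. If in addition $x\in\mathcal C_{\mathrm{dom}}$, then $v$ is a dominant eigenvector of $\Sigma$, i.e. $(\mathbf 1^\top x)^{-1}$ is the largest eigenvalue of $\Sigma$. Furthermore, $\mathcal C_{\mathrm{eig}}$ characterizes all such weightings: for every probability vector $\alpha\in\mathbb{R}^N_+$ for which $v$ is an eigenvector of $\sum_i\alpha_iq_iq_i^\top$ with nonzero eigenvalue $\lambda$, one has $\alpha/\lambda\in\mathcal C_{\mathrm{eig}}$ and $\alpha=x/(\mathbf 1^\top x)$ for $x=\alpha/\lambda$.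
   Context: $\mathcal S^{d-1}$ is the unit sphere in $\mathbb{R}^d$, $\mathbf 1$ is the all-ones vector, $\mathrm{diag}(u)$ is the diagonal matrix with diagonal $u$, inequalities $x\ge0$ are entrywise, and $A\succeq0$ means $A$ is positive semidefinite. *)

theory Defs
  imports "HOL-Analysis.Analysis"
begin

definition diag_mat :: "real^'n \<Rightarrow> real^'n^'n" where
  "diag_mat u = (\<chi> i j. if i = j then u $ i else 0)"

definition outer :: "real^'m \<Rightarrow> real^'n \<Rightarrow> real^'n^'m" where
  "outer u w = (\<chi> j k. u $ j * w $ k)"

definition psd :: "real^'n^'n \<Rightarrow> bool" where
  "psd A \<longleftrightarrow> transpose A = A \<and> (\<forall>y. 0 \<le> y \<bullet> (A *v y))"

definition is_eigenvector :: "real^'n^'n \<Rightarrow> real^'n \<Rightarrow> real \<Rightarrow> bool" where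
  "is_eigenvector A w \<mu> \<longleftrightarrow> w \<noteq> 0 \<and> A *v w = \<mu> *\<^sub>R w"

definition is_eigenvalue :: "real^'n^'n \<Rightarrow> real \<Rightarrow> bool" where
  "is_eigenvalue A \<mu> \<longleftrightarrow> (\<exists>w. is_eigenvector A w \<mu>)"

definition Sigma :: "real^'n^'d \<Rightarrow> real^'n \<Rightarrow> real^'d^'d" where
  "Sigma Q \<alpha> = (\<Sum>i\<in>UNIV. \<alpha> $ i *\<^sub>R outer (column i Q) (column i Q))"

definition C_eig :: "real^'n^'d \<Rightarrow> real^'d \<Rightarrow> (real^'n) set" where
  "C_eig Q v = {x. (\<forall>i. 0 \<le> x $ i) \<and> (Q ** diag_mat (transpose Q *v v)) *v x = v}"

definition C_dom :: "real^'n^'d \<Rightarrow> real^'d \<Rightarrow> (real^'n) set" where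
  "C_dom Q v = {x \<in> C_eig Q v. psd (mat 1 - Q ** diag_mat x ** transpose Q)}"

end

theory Submission imports Defs begin

lemma SigmaA: "Sigma Q a *v w = (\<Sum>i\<in>UNIV. (a$i * (column i Q \<bullet> w)) *\<^sub>R column i Q)"
  apply (simp add: vec_eq_iff Sigma_def matrix_vector_mult_def outer_def sum_component column_def inner_vec_def
      sum_distrib_left sum_distrib_right)
  apply (subst sum.swap) apply (simp add: algebra_simps)
  done

lemma CeigA: "(Q ** diag_mat (transpose Q *v v)) *v x = Sigma Q x *v v"
  apply (subst SigmaA)
  apply (simp add: vec_eq_iff matrix_matrix_mult_def diag_mat_def matrix_vector_mult_def transpose_def
      sum_component column_def inner_vec_def if_distrib sum_distrib_left sum_distrib_right cong: if_cong)
  apply (simp add: algebra_simps)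
  done

lemma domA: "Q ** diag_mat x ** transpose Q = Sigma Q x"
  apply (simp add: vec_eq_iff matrix_matrix_mult_def diag_mat_def transpose_def Sigma_def outer_def
      sum_component column_def if_distrib sum_distrib_left sum_distrib_right cong: if_cong)
  apply (simp add: algebra_simps)
  done

lemma SigmaScale: "Sigma Q (c *\<^sub>R a) = c *\<^sub>R Sigma Q a"
  by (simp add: Sigma_def scaleR_sum_right)

lemma quadA: "w \<bullet> (Sigma Q a *v w) = (\<Sum>i\<in>UNIV. a$i * (column i Q \<bullet> w)^2)"
  by (simp add: SigmaA inner_sum_right power2_eq_square inner_commute mult.assoc)

lemma scaleMV: "((c::real) *\<^sub>R (A::real^'n^'m)) *v w = c *\<^sub>R (A *v w)"
  by (simp add: vec_eq_iff matrix_vector_mult_def sum_distrib_left algebra_simps)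

theorem proposition5:
  fixes Q :: "real^'n^'d" and v :: "real^'d"
  assumes unit_cols: "\<forall>i. norm (column i Q) = 1"
    and unit_v: "norm v = 1"
  shows "(\<forall>x \<in> C_eig Q v.
            (\<forall>i. 0 \<le> (x /\<^sub>R (\<Sum>i\<in>UNIV. x $ i)) $ i)
          \<and> (\<Sum>i\<in>UNIV. (x /\<^sub>R (\<Sum>i\<in>UNIV. x $ i)) $ i) = 1
          \<and> is_eigenvector (Sigma Q (x /\<^sub>R (\<Sum>i\<in>UNIV. x $ i))) v (inverse (\<Sum>i\<in>UNIV. x $ i)))
       \<and> (\<forall>x \<in> C_dom Q v.
            (\<forall>\<mu>. is_eigenvalue (Sigma Q (x /\<^sub>R (\<Sum>i\<in>UNIV. x $ i))) \<mu>
                  \<longrightarrow> \<mu> \<le> inverse (\<Sum>i\<in>UNIV. x $ i)))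
       \<and> (\<forall>\<alpha> lam. (\<forall>i. 0 \<le> \<alpha> $ i) \<and> (\<Sum>i\<in>UNIV. \<alpha> $ i) = 1 \<and> lam \<noteq> 0
              \<and> is_eigenvector (Sigma Q \<alpha>) v lam
            \<longrightarrow> \<alpha> /\<^sub>R lam \<in> C_eig Q v
              \<and> \<alpha> = (\<alpha> /\<^sub>R lam) /\<^sub>R (\<Sum>i\<in>UNIV. (\<alpha> /\<^sub>R lam) $ i))"
proof (intro conjI ballI)
  have v0: "v \<noteq> 0" using unit_v by auto
  have key: "\<And>x. x \<in> C_eig Q v \<Longrightarrow> (\<forall>i. 0 \<le> x$i) \<and> Sigma Q x *v v = v \<and> (\<Sum>i\<in>UNIV. x $ i) > 0"
  proof -
    fix x assume x: "x \<in> C_eig Q v"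
    hence nn: "\<forall>i. 0 \<le> x$i" and e: "Sigma Q x *v v = v" unfolding C_eig_def CeigA by auto
    have "(\<Sum>i\<in>UNIV. x $ i) \<noteq> 0"
    proof
      assume "(\<Sum>i\<in>UNIV. x $ i) = 0"
      hence "\<forall>i\<in>UNIV. x$i = 0" using nn by (simp add: sum_nonneg_eq_0_iff)
      hence "x = 0" by (simp add: vec_eq_iff)
      hence "Sigma Q x = 0" by (simp add: Sigma_def)
      thus False using e v0 by simp
    qed
    moreover have "(\<Sum>i\<in>UNIV. x $ i) \<ge> 0" using nn by (simp add: sum_nonneg)
    ultimately show "(\<forall>i. 0 \<le> x$i) \<and> Sigma Q x *v v = v \<and> (\<Sum>i\<in>UNIV. x $ i) > 0" using nn e by simp
  qed
  {
    fix x assume x: "x \<in> C_eig Q v"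
    note k = key[OF x]
    let ?s = "\<Sum>i\<in>UNIV. x $ i"
    show "\<forall>i. 0 \<le> (x /\<^sub>R ?s) $ i" using k by simp
    show "(\<Sum>i\<in>UNIV. (x /\<^sub>R ?s) $ i) = 1" using k by (simp add: sum_distrib_left[symmetric])
    show "is_eigenvector (Sigma Q (x /\<^sub>R ?s)) v (inverse ?s)"
      using k v0 by (simp add: is_eigenvector_def SigmaScale scaleMV)
  }
  {
    fix x assume x: "x \<in> C_dom Q v"
    show "\<forall>\<mu>. is_eigenvalue (Sigma Q (x /\<^sub>R (\<Sum>i\<in>UNIV. x $ i))) \<mu> \<longrightarrow> \<mu> \<le> inverse (\<Sum>i\<in>UNIV. x $ i)"
    proof (intro allI impI)
    fix \<mu> assume ev: "is_eigenvalue (Sigma Q (x /\<^sub>R (\<Sum>i\<in>UNIV. x $ i))) \<mu>"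
    let ?s = "\<Sum>i\<in>UNIV. x $ i"
    have xe: "x \<in> C_eig Q v" and p: "psd (mat 1 - Sigma Q x)" using x by (auto simp: C_dom_def domA)
    note k = key[OF xe]
    obtain w where w0: "w \<noteq> 0" and wE: "Sigma Q (x /\<^sub>R ?s) *v w = \<mu> *\<^sub>R w"
      using ev by (auto simp: is_eigenvalue_def is_eigenvector_def)
    have "Sigma Q x *v w = (?s * \<mu>) *\<^sub>R w"
    proof -
      have "Sigma Q x = ?s *\<^sub>R Sigma Q (x /\<^sub>R ?s)" using k by (simp add: SigmaScale)
      thus ?thesis using wE by (simp add: scaleMV)
    qed
    hence "0 \<le> w \<bullet> ((mat 1 - Sigma Q x) *v w)" using p by (simp add: psd_def)
    also have "\<dots> = (1 - ?s * \<mu>) * (w \<bullet> w)"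
      using \<open>Sigma Q x *v w = (?s * \<mu>) *\<^sub>R w\<close>
      by (simp add: matrix_vector_mult_diff_rdistrib inner_diff_right algebra_simps)
    finally have "0 \<le> (1 - ?s * \<mu>) * (w \<bullet> w)" .
    moreover have "w \<bullet> w > 0" using w0 by simp
    ultimately have "?s * \<mu> \<le> 1" by (simp add: zero_le_mult_iff)
    thus "\<mu> \<le> inverse ?s" using k by (simp add: field_simps)
    qed
  }
  show "\<forall>\<alpha> lam. (\<forall>i. 0 \<le> \<alpha> $ i) \<and> (\<Sum>i\<in>UNIV. \<alpha> $ i) = 1 \<and> lam \<noteq> 0
              \<and> is_eigenvector (Sigma Q \<alpha>) v lam
            \<longrightarrow> \<alpha> /\<^sub>R lam \<in> C_eig Q v
              \<and> \<alpha> = (\<alpha> /\<^sub>R lam) /\<^sub>R (\<Sum>i\<in>UNIV. (\<alpha> /\<^sub>R lam) $ i)"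
  proof (intro allI impI conjI)
    fix \<alpha> lam assume h: "(\<forall>i. 0 \<le> \<alpha> $ i) \<and> (\<Sum>i\<in>UNIV. \<alpha> $ i) = 1 \<and> lam \<noteq> 0 \<and> is_eigenvector (Sigma Q \<alpha>) v lam"
    hence e: "Sigma Q \<alpha> *v v = lam *\<^sub>R v" and nn: "\<forall>i. 0 \<le> \<alpha> $ i" and s1: "(\<Sum>i\<in>UNIV. \<alpha> $ i) = 1"
      and l0: "lam \<noteq> 0" by (auto simp: is_eigenvector_def)
    have "0 \<le> v \<bullet> (Sigma Q \<alpha> *v v)" unfolding quadA using nn by (simp add: sum_nonneg)
    also have "\<dots> = lam * (v \<bullet> v)" using e by simp
    finally have "0 \<le> lam * (v \<bullet> v)" .
    moreover have "v \<bullet> v > 0" using v0 by simp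
    ultimately have lp: "lam > 0" using l0 by (simp add: zero_le_mult_iff)
    have "Sigma Q (\<alpha> /\<^sub>R lam) *v v = v" using e lp by (simp add: SigmaScale scaleMV)
    thus "\<alpha> /\<^sub>R lam \<in> C_eig Q v" using nn lp unfolding C_eig_def CeigA by simp
    have "(\<Sum>i\<in>UNIV. (\<alpha> /\<^sub>R lam) $ i) = 1 / lam" using s1 by (simp add: sum_distrib_left[symmetric] divide_inverse)
    thus "\<alpha> = (\<alpha> /\<^sub>R lam) /\<^sub>R (\<Sum>i\<in>UNIV. (\<alpha> /\<^sub>R lam) $ i)" using lp by simp
  qed
qed

end
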